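(* Let $A=(a_{i,j})_{i,j\in\llbracket1,n\rrbracket}$ be a generalized Cartan matrix and $(\mathbb A,\Pi,\Pi^\vee)$ a generalized free realization of $A$. Let $W^v_{\mathbb A}$ be the subgroup of $GL(\mathbb A)$ generated by the reflections $r_i(v)=v-\alpha_i(v)\alpha_i^\vee$, and $Q^\vee_{\mathbb A}=\bigoplus_i\mathbb Z\alpha_i^\vee$. Then $W^v_{\mathbb A}$ stabilizes $Q^\vee_{\mathbb A}$ and the restriction map $W^v_{\mathbb A}\to\mathrm{Aut}_{\mathbb Z}(Q^\vee_{\mathbb A})$, $w\mapsto w|_{Q^\vee_{\mathbb A}}$, is injective.
   Context: A generalized Cartan matrix satisfies $a_{i,i}=2$, $a_{i,j}\in\mathbb Z_{\le0}$ for $i\ne j$, $a_{i,j}=0\iff a_{j,i}=0$. A generalized free realization of $A$ is a triple $(\mathbb A,\Pi,\Pi^\vee)$ with $\mathbb A$ a finite-dimensional real vector space, $\Pi=\{\alpha_1,\dots,\alpha_n\}\subset\mathbb A^*$ and $\Pi^\vee=\{\alpha_1^\vee,\dots,\alpha_n^\vee\}\subset\mathbb A$ both linearly independent families of cardinality $n$, with $\alpha_j(\alpha_i^\vee)=a_{i,j}$ for all $i,j$. *)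

theory Defs
  imports "HOL-Analysis.Analysis"
begin

text \<open>Indices are 0,...,n-1 (shifted from 1..n).\<close>

definition gen_cartan_matrix :: "nat \<Rightarrow> (nat \<Rightarrow> nat \<Rightarrow> int) \<Rightarrow> bool" where
  "gen_cartan_matrix n a \<longleftrightarrow>
     (\<forall>i<n. a i i = 2) \<and>
     (\<forall>i<n. \<forall>j<n. i \<noteq> j \<longrightarrow> a i j \<le> 0) \<and>
     (\<forall>i<n. \<forall>j<n. a i j = 0 \<longleftrightarrow> a j i = 0)"

definition lin_indep_forms :: "nat \<Rightarrow> (nat \<Rightarrow> 'a::real_vector \<Rightarrow> real) \<Rightarrow> bool" where
  "lin_indep_forms n \<alpha> \<longleftrightarrow>
     (\<forall>c::nat \<Rightarrow> real. (\<forall>v. (\<Sum>i<n. c i * \<alpha> i v) = 0) \<longrightarrow> (\<forall>i<n. c i = 0))"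

definition lin_indep_family :: "nat \<Rightarrow> (nat \<Rightarrow> 'a::real_vector) \<Rightarrow> bool" where
  "lin_indep_family n x \<longleftrightarrow>
     (\<forall>c::nat \<Rightarrow> real. (\<Sum>i<n. c i *\<^sub>R x i) = 0 \<longrightarrow> (\<forall>i<n. c i = 0))"

definition gen_free_realization ::
  "nat \<Rightarrow> (nat \<Rightarrow> nat \<Rightarrow> int) \<Rightarrow> (nat \<Rightarrow> 'a::euclidean_space \<Rightarrow> real) \<Rightarrow> (nat \<Rightarrow> 'a) \<Rightarrow> bool" where
  "gen_free_realization n a \<alpha> \<alpha>v \<longleftrightarrow>
     (\<forall>i<n. linear (\<alpha> i)) \<and> lin_indep_forms n \<alpha> \<and> lin_indep_family n \<alpha>v \<and>
     (\<forall>i<n. \<forall>j<n. \<alpha> j (\<alpha>v i) = of_int (a i j))"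

definition simple_refl :: "(nat \<Rightarrow> 'a::real_vector \<Rightarrow> real) \<Rightarrow> (nat \<Rightarrow> 'a) \<Rightarrow> nat \<Rightarrow> 'a \<Rightarrow> 'a" where
  "simple_refl \<alpha> \<alpha>v i v = v - \<alpha> i v *\<^sub>R \<alpha>v i"

inductive_set weyl_group :: "nat \<Rightarrow> (nat \<Rightarrow> 'a::real_vector \<Rightarrow> real) \<Rightarrow> (nat \<Rightarrow> 'a) \<Rightarrow> ('a \<Rightarrow> 'a) set"
  for n \<alpha> \<alpha>v where
  id: "id \<in> weyl_group n \<alpha> \<alpha>v"
| gen: "i < n \<Longrightarrow> simple_refl \<alpha> \<alpha>v i \<in> weyl_group n \<alpha> \<alpha>v"
| comp: "w \<in> weyl_group n \<alpha> \<alpha>v \<Longrightarrow> w' \<in> weyl_group n \<alpha> \<alpha>v \<Longrightarrow> w \<circ> w' \<in> weyl_group n \<alpha> \<alpha>v"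
| inverse: "w \<in> weyl_group n \<alpha> \<alpha>v \<Longrightarrow> inv w \<in> weyl_group n \<alpha> \<alpha>v"

definition coroot_lattice :: "nat \<Rightarrow> (nat \<Rightarrow> 'a::real_vector) \<Rightarrow> 'a set" where
  "coroot_lattice n \<alpha>v = {\<Sum>i<n. of_int (k i) *\<^sub>R \<alpha>v i | k :: nat \<Rightarrow> int. True}"

end

theory Submission
  imports Defs
begin


fun alt :: "nat \<Rightarrow> nat \<Rightarrow> nat \<Rightarrow> nat list" where
  "alt x y 0 = []"
| "alt x y (Suc k) = alt y x k @ [x]"

lemma alt_Suc_cons: "alt x y (Suc k) = (if even k then x else y) # alt x y k"
  by (induction k arbitrary: x y) auto

lemma length_alt[simp]: "length (alt x y k) = k"
  by (induction k arbitrary: x y) auto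

lemma set_alt: "set (alt x y k) \<subseteq> {x, y}"
  by (induction k arbitrary: x y) auto

lemma alt_add: "alt x y (k + b) = (if even b then alt x y k else alt y x k) @ alt x y b"
  by (induction b arbitrary: x y) auto

locale GCM =
  fixes n :: nat and a :: "nat \<Rightarrow> nat \<Rightarrow> int"
    and \<alpha> :: "nat \<Rightarrow> 'a::euclidean_space \<Rightarrow> real" and \<alpha>v :: "nat \<Rightarrow> 'a"
  assumes cart: "gen_cartan_matrix n a"
    and real: "gen_free_realization n a \<alpha> \<alpha>v"
begin

definition r :: "nat \<Rightarrow> 'a \<Rightarrow> 'a" where "r = simple_refl \<alpha> \<alpha>v"

definition ev :: "nat list \<Rightarrow> 'a \<Rightarrow> 'a" where
  "ev ws = foldr (\<lambda>i f. r i \<circ> f) ws id"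

definition len :: "('a \<Rightarrow> 'a) \<Rightarrow> nat" where
  "len w = (LEAST k. \<exists>ws\<in>lists {..<n}. length ws = k \<and> ev ws = w)"

lemma lin: "i < n \<Longrightarrow> linear (\<alpha> i)"
  using real unfolding gen_free_realization_def by auto

lemma pair: "i < n \<Longrightarrow> j < n \<Longrightarrow> \<alpha> j (\<alpha>v i) = of_int (a i j)"
  using real unfolding gen_free_realization_def by auto

lemma two: "i < n \<Longrightarrow> \<alpha> i (\<alpha>v i) = 2"
  using pair[of i i] cart unfolding gen_cartan_matrix_def by auto

lemma indep: "lin_indep_family n \<alpha>v"
  using real unfolding gen_free_realization_def by auto

lemma r_apply: "r i v = v - \<alpha> i v *\<^sub>R \<alpha>v i"
  by (simp add: r_def simple_refl_def)

lemma r_linear: "i < n \<Longrightarrow> linear (r i)"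
  by (rule linearI) (auto simp: r_apply linear_add[OF lin] linear_scale[OF lin] algebra_simps)

lemma r_r: "i < n \<Longrightarrow> r i (r i v) = v"
  by (simp add: r_apply linear_diff[OF lin] linear_scale[OF lin] two algebra_simps)

lemma r_r_comp: "i < n \<Longrightarrow> r i \<circ> r i = id"
  by (auto simp: r_r)

lemma ev_Nil[simp]: "ev [] = id" by (simp add: ev_def)
lemma ev_Cons[simp]: "ev (i # ws) = r i \<circ> ev ws" by (simp add: ev_def)
lemma ev_append: "ev (ws @ vs) = ev ws \<circ> ev vs"
  by (induction ws) (auto simp: ev_def)
lemma ev_snoc: "ev (ws @ [i]) = ev ws \<circ> r i"
  by (simp add: ev_append)

lemma ev_linear: "ws \<in> lists {..<n} \<Longrightarrow> linear (ev ws)"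
  by (induction ws) (auto intro: linear_compose r_linear simp: linear_id)

lemma ev_rev: "ws \<in> lists {..<n} \<Longrightarrow> ev (rev ws) \<circ> ev ws = id"
proof (induction ws)
  case Nil then show ?case by simp
next
  case (Cons i ws)
  have "ev (rev (i # ws)) \<circ> ev (i # ws) = ev (rev ws) \<circ> (r i \<circ> r i) \<circ> ev ws"
    by (simp add: ev_append comp_assoc)
  also have "\<dots> = ev (rev ws) \<circ> ev ws" using Cons.prems by (simp add: r_r_comp)
  also have "\<dots> = id" using Cons.IH Cons.prems by (simp add: comp_def id_def)
  finally show ?case .
qed

lemma ev_rev2: "ws \<in> lists {..<n} \<Longrightarrow> ev ws \<circ> ev (rev ws) = id"
proof -
  assume "ws \<in> lists {..<n}"
  then have "rev ws \<in> lists {..<n}" by auto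
  from ev_rev[OF this] show ?thesis by simp
qed

lemma weyl_eq: "w \<in> weyl_group n \<alpha> \<alpha>v \<Longrightarrow> \<exists>ws\<in>lists {..<n}. ev ws = w"
proof (induction rule: weyl_group.induct)
  case id then show ?case by (intro bexI[of _ "[]"]) auto
next
  case (gen i) then show ?case by (intro bexI[of _ "[i]"]) (auto simp: r_def)
next
  case (comp w w')
  then obtain ws ws' where "ws \<in> lists {..<n}" "ev ws = w" "ws' \<in> lists {..<n}" "ev ws' = w'" by blast
  then show ?case by (intro bexI[of _ "ws @ ws'"]) (auto simp: ev_append)
next
  case (inverse w)
  then obtain ws where ws: "ws \<in> lists {..<n}" "ev ws = w" by blast
  have "inv w = ev (rev ws)" using ws ev_rev ev_rev2 by (metis inv_unique_comp)
  then show ?case using ws by (intro bexI[of _ "rev ws"]) auto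
qed

lemma len_le: "ws \<in> lists {..<n} \<Longrightarrow> len (ev ws) \<le> length ws"
  unfolding len_def by (rule Least_le) auto

lemma len_ex: "ws \<in> lists {..<n} \<Longrightarrow> \<exists>vs\<in>lists {..<n}. length vs = len (ev ws) \<and> ev vs = ev ws"
  unfolding len_def by (rule LeastI_ex) auto

end



fun cf :: "real \<Rightarrow> real \<Rightarrow> nat \<Rightarrow> real \<times> real" where
  "cf x y 0 = (1, 0)"
| "cf x y (Suc k) = (let (A, B) = cf x y k in if even k then (A, x * A - B) else (y * B - A, B))"

lemma cf_inf:
  assumes x: "x \<ge> 0" and y: "y \<ge> 0" and xy: "x * y \<ge> 4"
  shows "fst (cf x y k) \<ge> 0 \<and> snd (cf x y k) \<ge> 0 \<and>
         (if even k then x * fst (cf x y k) \<ge> 2 * snd (cf x y k) else y * snd (cf x y k) \<ge> 2 * fst (cf x y k))"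
proof (induction k)
  case 0 then show ?case using x by simp
next
  case (Suc k)
  obtain A B where AB: "cf x y k = (A, B)" by fastforce
  show ?case
  proof (cases "even k")
    case True
    with Suc AB have h: "A \<ge> 0" "B \<ge> 0" "x * A \<ge> 2 * B" by auto
    have "y * (2 * B) \<le> y * (x * A)" using h(3) y by (rule mult_left_mono)
    moreover have "x * y * A \<ge> 4 * A" using xy h(1) by (rule mult_right_mono)
    ultimately have "y * (x * A - B) \<ge> 2 * A" by (simp add: algebra_simps)
    then show ?thesis using AB True h by auto
  next
    case False
    with Suc AB have h: "A \<ge> 0" "B \<ge> 0" "y * B \<ge> 2 * A" by auto
    have "x * (2 * A) \<le> x * (y * B)" using h(3) x by (rule mult_left_mono)
    moreover have "x * y * B \<ge> 4 * B" using xy h(2) by (rule mult_right_mono)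
    ultimately have "x * (y * B - A) \<ge> 2 * B" by (simp add: algebra_simps)
    then show ?thesis using AB False h by auto
  qed
qed

context GCM begin

lemma sc2: "(c * 2) *\<^sub>R (x::'a) = c *\<^sub>R x + c *\<^sub>R x"
  by (metis mult_2_right scaleR_add_left)

lemma ev_alt_coef:
  assumes i: "i < n" and j: "j < n"
  shows "ev (alt j i k) (\<alpha>v i) = fst (cf (- of_int (a i j)) (- of_int (a j i)) k) *\<^sub>R \<alpha>v i
                              + snd (cf (- of_int (a i j)) (- of_int (a j i)) k) *\<^sub>R \<alpha>v j"
proof (induction k)
  case 0 then show ?case by simp
next
  case (Suc k)
  obtain A B where AB: "cf (- of_int (a i j)) (- of_int (a j i)) k = (A, B)" by fastforce
  have li: "linear (\<alpha> i)" and lj: "linear (\<alpha> j)" using lin i j by auto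
  have e: "ev (alt j i (Suc k)) = r (if even k then j else i) \<circ> ev (alt j i k)"
    by (simp only: alt_Suc_cons ev_Cons)
  show ?case
    unfolding e using Suc AB
    by (auto simp: sc2 r_apply linear_add[OF li] linear_scale[OF li]
        linear_add[OF lj] linear_scale[OF lj] two i j pair algebra_simps)
qed

lemma dih_rel:
  assumes i: "i < n" and j: "j < n"
    and cases: "(a i j = -1 \<and> a j i = -1 \<and> m = 3) \<or> (a i j = 0 \<and> a j i = 0 \<and> m = 2)
      \<or> (a i j = -1 \<and> a j i = -2 \<and> m = 4) \<or> (a i j = -2 \<and> a j i = -1 \<and> m = 4)
      \<or> (a i j = -1 \<and> a j i = -3 \<and> m = 6) \<or> (a i j = -3 \<and> a j i = -1 \<and> m = 6)"
  shows "ev (alt i j (2 * m)) = id"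
proof
  fix v
  define S where "S c d = v + c *\<^sub>R \<alpha>v i + d *\<^sub>R \<alpha>v j" for c d
  have li: "linear (\<alpha> i)" and lj: "linear (\<alpha> j)" using lin i j by auto
  have Ri: "r i (S c d) = S (- c - \<alpha> i v - d * of_int (a j i)) d" for c d
    by (simp add: sc2 S_def r_apply linear_add[OF li] linear_scale[OF li] two i j pair algebra_simps)
  have Rj: "r j (S c d) = S c (- d - \<alpha> j v - c * of_int (a i j))" for c d
    by (simp add: sc2 S_def r_apply linear_add[OF lj] linear_scale[OF lj] two i j pair algebra_simps)
  have v: "v = S 0 0" by (simp add: S_def)
  have "ev (alt i j (2 * m)) (S 0 0) = S 0 0"
    using cases by (auto simp: numeral_eq_Suc Ri Rj)
  then show "ev (alt i j (2 * m)) v = id v" using v by simp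
qed

end



lemma alt_form:
  assumes "i \<noteq> j" "us \<in> lists {i, j}" "\<forall>p x q. us \<noteq> p @ x # x # q"
  shows "us = alt i j (length us) \<or> us = alt j i (length us)"
  using assms(2,3)
proof (induction us rule: rev_induct)
  case Nil then show ?case by simp
next
  case (snoc z us)
  have nd: "\<forall>p x q. us \<noteq> p @ x # x # q"
  proof (intro allI notI)
    fix p x q assume "us = p @ x # x # q"
    then have "us @ [z] = p @ x # x # (q @ [z])" by simp
    with snoc.prems show False by blast
  qed
  have IH: "us = alt i j (length us) \<or> us = alt j i (length us)" using snoc nd by auto
  show ?case
  proof (cases us rule: rev_cases)
    case Nil then show ?thesis using snoc.prems by auto
  next
    case (snoc us0 w)
    have "w \<noteq> z" using snoc.prems \<open>us = us0 @ [w]\<close> by fastforce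
    obtain L where L: "length us = Suc L" using snoc by auto
    have zin: "z \<in> {i, j}" "w \<in> {i,j}" using snoc.prems \<open>us = us0 @ [w]\<close> by auto
    from IH show ?thesis
    proof
      assume u: "us = alt i j (length us)"
      then have "us = alt j i L @ [i]" using L by simp
      then have "w = i" using \<open>us = us0 @ [w]\<close> by simp
      then have "z = j" using zin \<open>w \<noteq> z\<close> by auto
      then show ?thesis using u L by (metis alt.simps(2) length_append_singleton)
    next
      assume u: "us = alt j i (length us)"
      then have "us = alt i j L @ [j]" using L by simp
      then have "w = j" using \<open>us = us0 @ [w]\<close> by simp
      then have "z = i" using zin \<open>w \<noteq> z\<close> by auto
      then show ?thesis using u L by (metis alt.simps(2) length_append_singleton)
    qed
  qed
qed

lemma cf_fin:
  assumes "(x = 1 \<and> y = 1 \<and> k < 3) \<or> (x = 0 \<and> y = 0 \<and> k < 2) \<or> (x = 1 \<and> y = 2 \<and> k < 4)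
     \<or> (x = 2 \<and> y = 1 \<and> k < 4) \<or> (x = 1 \<and> y = 3 \<and> k < 6) \<or> (x = 3 \<and> y = 1 \<and> k < 6)"
  shows "fst (cf x y k) \<ge> 0 \<and> snd (cf x y k) \<ge> 0"
  using assms by (auto simp: less_Suc_eq numeral_eq_Suc)

context GCM begin

lemma lists_ij: "i < n \<Longrightarrow> j < n \<Longrightarrow> us \<in> lists {i, j} \<Longrightarrow> us \<in> lists {..<n}"
  by auto

lemma cart_cases:
  assumes i: "i < n" and j: "j < n" and ij: "i \<noteq> j"
    and lt: "\<not> (- of_int (a i j)) * (- of_int (a j i)) \<ge> (4::real)"
  shows "\<exists>m::nat. (a i j = -1 \<and> a j i = -1 \<and> m = 3) \<or> (a i j = 0 \<and> a j i = 0 \<and> m = 2)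
      \<or> (a i j = -1 \<and> a j i = -2 \<and> m = 4) \<or> (a i j = -2 \<and> a j i = -1 \<and> m = 4)
      \<or> (a i j = -1 \<and> a j i = -3 \<and> m = 6) \<or> (a i j = -3 \<and> a j i = -1 \<and> m = 6)"
proof -
  have h1: "a i j \<le> 0" "a j i \<le> 0" "a i j = 0 \<longleftrightarrow> a j i = 0"
    using cart i j ij unfolding gen_cartan_matrix_def by auto
  have h2: "a i j * a j i < 4" using lt
    by (metis mult_minus_left mult_minus_right minus_minus not_less of_int_less_iff of_int_mult of_int_numeral)
  define p where "p = - a i j"
  define q where "q = - a j i"
  have p: "p \<ge> 0" "q \<ge> 0" "p = 0 \<longleftrightarrow> q = 0" "p * q < 4" using h1 h2 by (auto simp: p_def q_def)
  have "(p = 0 \<and> q = 0) \<or> (p = 1 \<and> q = 1) \<or> (p = 1 \<and> q = 2) \<or> (p = 2 \<and> q = 1)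
     \<or> (p = 1 \<and> q = 3) \<or> (p = 3 \<and> q = 1)"
  proof (cases "p = 0")
    case True then show ?thesis using p by auto
  next
    case False
    then have p1: "p \<ge> 1" "q \<ge> 1" using p by auto
    have "p \<le> 3"
    proof (rule ccontr)
      assume "\<not> p \<le> 3"
      have "p * 1 \<le> p * q" using p1 p by (intro mult_left_mono) auto
      then show False using p \<open>\<not> p \<le> 3\<close> by linarith
    qed
    moreover have "q \<le> 3"
    proof (rule ccontr)
      assume "\<not> q \<le> 3"
      have "1 * q \<le> p * q" using p1 p by (intro mult_right_mono) auto
      then show False using p \<open>\<not> q \<le> 3\<close> by linarith
    qed
    ultimately have "p = 1 \<or> p = 2 \<or> p = 3" "q = 1 \<or> q = 2 \<or> q = 3" using p1 by arith+
    then show ?thesis using p(4) by (elim disjE) simp_all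
  qed
  then show ?thesis unfolding p_def q_def
    by (elim disjE) (simp_all add: minus_equation_iff[of "a i j"] minus_equation_iff[of "a j i"])
qed

lemma rank2:
  assumes i: "i < n" and j: "j < n" and ij: "i \<noteq> j" and us: "us \<in> lists {i, j}"
    and ha: "\<forall>us'\<in>lists {i, j}. ev us' = ev us \<longrightarrow> length us \<le> length us'"
    and hb: "\<forall>us'\<in>lists {i, j}. ev us' = ev us \<circ> r i \<longrightarrow> length us \<le> length us'"
  shows "\<exists>A B. A \<ge> 0 \<and> B \<ge> 0 \<and> ev us (\<alpha>v i) = A *\<^sub>R \<alpha>v i + B *\<^sub>R \<alpha>v j"
proof -
  have nd: "\<forall>p x q. us \<noteq> p @ x # x # q"
  proof (intro allI notI)
    fix p x q assume u: "us = p @ x # x # q"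
    then have x: "x < n" using us i j by auto
    have "ev (p @ q) = ev us" using u r_r[OF x] by (simp add: ev_append fun_eq_iff)
    moreover have "p @ q \<in> lists {i, j}" using us u by auto
    ultimately have "length us \<le> length (p @ q)" using ha by blast
    then show False using u by simp
  qed
  define k where "k = length us"
  have uk: "us = alt j i k"
  proof -
    have "us = alt i j k \<or> us = alt j i k" using alt_form[OF ij us nd] k_def by simp
    moreover have "us \<noteq> alt i j k \<or> k = 0"
    proof (rule ccontr)
      assume "\<not> (us \<noteq> alt i j k \<or> k = 0)"
      then obtain L where L: "k = Suc L" "us = alt j i L @ [i]" by (cases k) auto
      have "ev (alt j i L) = ev us \<circ> r i" using L r_r_comp[OF i] by (simp add: ev_snoc comp_assoc)
      moreover have "alt j i L \<in> lists {i, j}" using set_alt[of j i L] by auto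
      ultimately have "length us \<le> length (alt j i L)" using hb by blast
      then show False using L by simp
    qed
    ultimately show ?thesis by auto
  qed
  define x where "x = - (of_int (a i j) :: real)"
  define y where "y = - (of_int (a j i) :: real)"
  have xy0: "x \<ge> 0" "y \<ge> 0" using cart i j ij unfolding gen_cartan_matrix_def x_def y_def by auto
  have coef: "ev us (\<alpha>v i) = fst (cf x y k) *\<^sub>R \<alpha>v i + snd (cf x y k) *\<^sub>R \<alpha>v j"
    using ev_alt_coef[OF i j, of k] uk x_def y_def by simp
  show ?thesis
  proof (cases "x * y \<ge> 4")
    case True
    then show ?thesis using cf_inf[OF xy0 True, of k] coef by blast
  next
    case False
    then obtain m :: nat where m: "(a i j = -1 \<and> a j i = -1 \<and> m = 3) \<or> (a i j = 0 \<and> a j i = 0 \<and> m = 2)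
      \<or> (a i j = -1 \<and> a j i = -2 \<and> m = 4) \<or> (a i j = -2 \<and> a j i = -1 \<and> m = 4)
      \<or> (a i j = -1 \<and> a j i = -3 \<and> m = 6) \<or> (a i j = -3 \<and> a j i = -1 \<and> m = 6)"
      using cart_cases[OF i j ij False[unfolded x_def y_def]] by blast
    have rel: "ev (alt i j (2 * m)) = id" by (rule dih_rel[OF i j m])
    have m2: "m \<ge> 2" using m by auto
    show ?thesis
    proof (cases "k < m")
      case True
      have "(x = 1 \<and> y = 1 \<and> k < 3) \<or> (x = 0 \<and> y = 0 \<and> k < 2) \<or> (x = 1 \<and> y = 2 \<and> k < 4)
     \<or> (x = 2 \<and> y = 1 \<and> k < 4) \<or> (x = 1 \<and> y = 3 \<and> k < 6) \<or> (x = 3 \<and> y = 1 \<and> k < 6)"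
        using m True unfolding x_def y_def by (elim disjE) simp_all
      then have "fst (cf x y k) \<ge> 0 \<and> snd (cf x y k) \<ge> 0" by (rule cf_fin)
      then show ?thesis using coef by blast
    next
      case False
      have e1: "ev us \<circ> r i = ev (alt i j (Suc k))" using uk by (simp add: ev_snoc)
      have ll: "\<forall>L. alt i j L \<in> lists {i, j} \<and> alt j i L \<in> lists {i, j}"
      proof (intro allI conjI)
        fix L show "alt i j L \<in> lists {i, j}" using set_alt[of i j L] by auto
        show "alt j i L \<in> lists {i, j}" using set_alt[of j i L] by auto
      qed
      obtain ws where ws: "ws \<in> lists {i, j}" "length ws < k" "ev ws = ev (alt i j (Suc k))"
      proof (cases "Suc k \<ge> 2 * m")
        case True
        define pre where "pre = (if even (2*m) then alt i j (Suc k - 2*m) else alt j i (Suc k - 2*m))"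
        have "alt i j (Suc k) = pre @ alt i j (2 * m)"
          using alt_add[of i j "Suc k - 2*m" "2*m"] True pre_def by simp
        then have "ev (alt i j (Suc k)) = ev pre" using rel by (simp add: ev_append)
        moreover have "pre \<in> lists {i, j}" using ll pre_def by auto
        moreover have "length pre < k" using pre_def m2 True by auto
        ultimately show ?thesis using that by metis
      next
        case F2: False
        define pre where "pre = (if even (Suc k) then alt i j (2*m - Suc k) else alt j i (2*m - Suc k))"
        have "alt i j (2 * m) = pre @ alt i j (Suc k)"
          using alt_add[of i j "2*m - Suc k" "Suc k"] F2 pre_def by simp
        then have id1: "ev pre \<circ> ev (alt i j (Suc k)) = id" using rel by (simp add: ev_append)
        have prel: "pre \<in> lists {i, j}" using ll pre_def by auto
        then have "pre \<in> lists {..<n}" using i j by auto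
        then have "ev (rev pre) \<circ> ev pre = id" by (rule ev_rev)
        then have "ev (alt i j (Suc k)) = (ev (rev pre) \<circ> ev pre) \<circ> ev (alt i j (Suc k))"
          by (simp only: id_comp)
        also have "\<dots> = ev (rev pre) \<circ> (ev pre \<circ> ev (alt i j (Suc k)))" by (rule comp_assoc)
        also have "\<dots> = ev (rev pre)" by (simp only: id1 comp_id)
        finally have "ev (rev pre) = ev (alt i j (Suc k))" by (rule sym)
        moreover have "rev pre \<in> lists {i, j}" using prel by auto
        moreover have "length (rev pre) < k" using pre_def False F2 by auto
        ultimately show ?thesis using that by metis
      qed
      then have "length us \<le> length ws" using hb e1 by metis
      then show ?thesis using ws k_def by simp
    qed
  qed
qed

end



context GCM begin

definition pos :: "'a \<Rightarrow> bool" where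
  "pos v \<longleftrightarrow> (\<exists>c. (\<forall>k<n. c k \<ge> 0) \<and> v = (\<Sum>k<n. c k *\<^sub>R \<alpha>v k))"

lemma pos_add: "pos u \<Longrightarrow> pos v \<Longrightarrow> pos (u + v)"
  unfolding pos_def
proof (elim exE conjE)
  fix c d assume "\<forall>k<n. c k \<ge> 0" "u = (\<Sum>k<n. c k *\<^sub>R \<alpha>v k)" "\<forall>k<n. d k \<ge> 0" "v = (\<Sum>k<n. d k *\<^sub>R \<alpha>v k)"
  then show "\<exists>e. (\<forall>k<n. e k \<ge> 0) \<and> u + v = (\<Sum>k<n. e k *\<^sub>R \<alpha>v k)"
    by (intro exI[of _ "\<lambda>k. c k + d k"]) (auto simp: scaleR_add_left sum.distrib)
qed

lemma pos_scale: "pos u \<Longrightarrow> t \<ge> 0 \<Longrightarrow> pos (t *\<^sub>R u)"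
  unfolding pos_def
proof (elim exE conjE)
  fix c assume "\<forall>k<n. c k \<ge> 0" "u = (\<Sum>k<n. c k *\<^sub>R \<alpha>v k)" "t \<ge> 0"
  then show "\<exists>e. (\<forall>k<n. e k \<ge> 0) \<and> t *\<^sub>R u = (\<Sum>k<n. e k *\<^sub>R \<alpha>v k)"
    by (intro exI[of _ "\<lambda>k. t * c k"]) (auto simp: scaleR_sum_right)
qed

lemma sum_delta_av: "i < n \<Longrightarrow> (\<Sum>k<n. (if k = i then 1 else 0) *\<^sub>R \<alpha>v k) = \<alpha>v i"
proof -
  assume i: "i < n"
  have "(\<Sum>k<n. (if k = i then 1 else 0) *\<^sub>R \<alpha>v k) = (\<Sum>k<n. if k = i then \<alpha>v k else 0)"
    by (rule sum.cong) auto
  also have "\<dots> = \<alpha>v i" using i by simp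
  finally show ?thesis .
qed

lemma pos_av: "i < n \<Longrightarrow> pos (\<alpha>v i)"
  unfolding pos_def
  by (intro exI[of _ "\<lambda>k. if k = i then 1 else 0"]) (auto simp: sum_delta_av)

lemma not_pos_neg: assumes i: "i < n" shows "\<not> pos (- \<alpha>v i)"
proof
  assume "pos (- \<alpha>v i)"
  then obtain c where c: "\<forall>k<n. c k \<ge> 0" "- \<alpha>v i = (\<Sum>k<n. c k *\<^sub>R \<alpha>v k)" unfolding pos_def by blast
  define e where "e k = c k + (if k = i then 1 else 0)" for k
  have "(\<Sum>k<n. e k *\<^sub>R \<alpha>v k) = (\<Sum>k<n. c k *\<^sub>R \<alpha>v k) + (\<Sum>k<n. (if k = i then 1 else 0) *\<^sub>R \<alpha>v k)"
    unfolding e_def by (simp add: scaleR_add_left sum.distrib)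
  also have "(\<Sum>k<n. (if k = i then 1 else 0) *\<^sub>R \<alpha>v k) = \<alpha>v i"
    using i by (rule sum_delta_av)
  finally have "(\<Sum>k<n. e k *\<^sub>R \<alpha>v k) = 0" using c(2)[symmetric] by simp
  then have "e i = 0" using indep i unfolding lin_indep_family_def by blast
  then show False using c i unfolding e_def by force
qed

lemma len_comp: "vs \<in> lists {..<n} \<Longrightarrow> us \<in> lists {..<n} \<Longrightarrow> len (ev vs \<circ> ev us) \<le> len (ev vs) + length us"
proof -
  assume vs: "vs \<in> lists {..<n}" and us: "us \<in> lists {..<n}"
  obtain vs' where vs': "vs' \<in> lists {..<n}" "length vs' = len (ev vs)" "ev vs' = ev vs" using len_ex[OF vs] by blast
  have "len (ev (vs' @ us)) \<le> length (vs' @ us)" using vs' us by (intro len_le) auto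
  then show ?thesis using vs' by (simp add: ev_append)
qed

lemma lists_sub: "i < n \<Longrightarrow> j < n \<Longrightarrow> us \<in> lists {i, j} \<Longrightarrow> us \<in> lists {..<n}"
  by auto

lemma P_main:
  "ws \<in> lists {..<n} \<Longrightarrow> i < n \<Longrightarrow> len (ev ws \<circ> r i) \<ge> len (ev ws) \<Longrightarrow> pos (ev ws (\<alpha>v i))"
proof (induction "len (ev ws)" arbitrary: ws i rule: less_induct)
  case less
  define w where "w = ev ws"
  define k where "k = len w"
  obtain ws0 where ws0: "ws0 \<in> lists {..<n}" "length ws0 = k" "ev ws0 = w"
    using len_ex[OF less.prems(1)] unfolding w_def k_def by blast
  show ?case
  proof (cases "k = 0")
    case True
    then have "w = id" using ws0 by simp
    then show ?thesis using pos_av[OF less.prems(2)] w_def by simp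
  next
    case False
    have "ws0 \<noteq> []" using False ws0 by auto
    then obtain ws1 j where ws1: "ws0 = ws1 @ [j]" by (cases ws0 rule: rev_cases) auto
    have j: "j < n" and ws1l: "ws1 \<in> lists {..<n}" using ws0 ws1 by auto
    have wj: "w = ev ws1 \<circ> r j" using ws0 ws1 by (simp add: ev_snoc)
    have len1: "len (ev ws1) + 1 \<le> k" using len_le[OF ws1l] ws0 ws1 by simp
    have i: "i < n" by (rule less.prems(2))
    have hyp: "len (w \<circ> r i) \<ge> k" using less.prems(3) w_def k_def by simp
    have ij: "i \<noteq> j"
    proof
      assume "i = j"
      then have "w \<circ> r i = ev ws1" using wj r_r_comp[OF j] by (simp add: comp_assoc)
      then show False using hyp len1 by simp
    qed
    have GF: "k \<le> len (ev vs) + length us" if "vs \<in> lists {..<n}" "us \<in> lists {i, j}" "w = ev vs \<circ> ev us" for vs us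
      using len_comp[OF that(1) lists_sub[OF i j that(2)]] that(3) k_def by simp
    define Pr where "Pr = (\<lambda>(vs, us). vs \<in> lists {..<n} \<and> us \<in> lists {i, j} \<and> w = ev vs \<circ> ev us
                                  \<and> len (ev vs) + length us = k)"
    have "Pr (ws1, [j])"
    proof -
      have "k \<le> len (ev ws1) + length [j]" using GF[of ws1 "[j]"] ws1l wj by simp
      then show ?thesis unfolding Pr_def using ws1l wj len1 by simp
    qed
    then obtain p where pP: "Pr p" and pmin: "\<forall>q. Pr q \<longrightarrow> len (ev (fst p)) \<le> len (ev (fst q))"
      using ex_has_least_nat[of Pr "(ws1, [j])" "\<lambda>q. len (ev (fst q))"] by blast
    obtain vs us where p: "p = (vs, us)" by fastforce
    have vs: "vs \<in> lists {..<n}" and us: "us \<in> lists {i, j}" and wvu: "w = ev vs \<circ> ev us"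
      and lvu: "len (ev vs) + length us = k" using pP p Pr_def by auto
    have "len (ev vs) \<le> len (ev ws1)" using pmin \<open>Pr (ws1, [j])\<close> p by fastforce
    then have vlt: "len (ev vs) < len (ev ws)" using len1 k_def w_def by simp
    have stay: "len (ev vs \<circ> r t) \<ge> len (ev vs)" if t: "t \<in> {i, j}" for t
    proof (rule ccontr)
      assume nlt: "\<not> len (ev vs \<circ> r t) \<ge> len (ev vs)"
      have tn: "t < n" using t i j by auto
      have e1: "ev (vs @ [t]) = ev vs \<circ> r t" by (simp add: ev_snoc)
      have vs': "vs @ [t] \<in> lists {..<n}" using vs tn by auto
      have us': "t # us \<in> lists {i, j}" using us t by auto
      have w': "w = ev (vs @ [t]) \<circ> ev (t # us)"
        using wvu e1 r_r[OF tn] by (simp add: fun_eq_iff)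
      have "k \<le> len (ev (vs @ [t])) + length (t # us)" using GF[OF vs' us' w'] .
      moreover have "len (ev (vs @ [t])) + length (t # us) \<le> k" using nlt lvu e1 by simp
      ultimately have "Pr (vs @ [t], t # us)" unfolding Pr_def using vs' us' w' by simp
      then have "len (ev vs) \<le> len (ev (vs @ [t]))" using pmin p by fastforce
      then show False using nlt e1 by simp
    qed
    have pi: "pos (ev vs (\<alpha>v i))" using less.hyps[OF vlt vs i] stay[of i] by simp
    have pj: "pos (ev vs (\<alpha>v j))" using less.hyps[OF vlt vs j] stay[of j] by simp
    have ha: "\<forall>us'\<in>lists {i, j}. ev us' = ev us \<longrightarrow> length us \<le> length us'"
    proof (intro ballI impI)
      fix us' assume "us' \<in> lists {i, j}" "ev us' = ev us"
      then have "k \<le> len (ev vs) + length us'" using GF[OF vs, of us'] wvu by simp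
      then show "length us \<le> length us'" using lvu by simp
    qed
    have hb: "\<forall>us'\<in>lists {i, j}. ev us' = ev us \<circ> r i \<longrightarrow> length us \<le> length us'"
    proof (intro ballI impI)
      fix us' assume u': "us' \<in> lists {i, j}" "ev us' = ev us \<circ> r i"
      have "w \<circ> r i = ev vs \<circ> ev us'" using wvu u' by (simp add: comp_assoc)
      then have "len (w \<circ> r i) \<le> len (ev vs) + length us'"
        using len_comp[OF vs lists_sub[OF i j u'(1)]] by simp
      then show "length us \<le> length us'" using hyp lvu by simp
    qed
    obtain A B where AB: "A \<ge> 0" "B \<ge> 0" "ev us (\<alpha>v i) = A *\<^sub>R \<alpha>v i + B *\<^sub>R \<alpha>v j"
      using rank2[OF i j ij us ha hb] by blast
    have "ev ws (\<alpha>v i) = A *\<^sub>R ev vs (\<alpha>v i) + B *\<^sub>R ev vs (\<alpha>v j)"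
      using wvu AB(3) ev_linear[OF vs] w_def by (simp add: linear_add linear_scale)
    then show ?thesis using pi pj AB by (simp add: pos_add pos_scale)
  qed
qed

lemma faithful:
  assumes ws: "ws \<in> lists {..<n}" and fx: "\<forall>i<n. ev ws (\<alpha>v i) = \<alpha>v i"
  shows "ev ws = id"
proof (rule ccontr)
  assume ne: "ev ws \<noteq> id"
  obtain vs where vs: "vs \<in> lists {..<n}" "length vs = len (ev ws)" "ev vs = ev ws" using len_ex[OF ws] by blast
  have "vs \<noteq> []" using vs ne by auto
  then obtain vs1 i where v1: "vs = vs1 @ [i]" by (metis rev_exhaust)
  have i: "i < n" and vs1: "vs1 \<in> lists {..<n}" using vs v1 by auto
  have h00: "ev vs1 \<circ> r i = ev ws" using vs v1 by (simp add: ev_snoc)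
  have h0: "\<forall>x. ev vs1 (r i x) = ev ws x"
  proof
    fix x show "ev vs1 (r i x) = ev ws x" using fun_cong[OF h00, of x] by simp
  qed
  have h: "ev vs1 = ev ws \<circ> r i"
  proof
    fix x show "ev vs1 x = (ev ws \<circ> r i) x" using h0[rule_format, of "r i x"] r_r[OF i] by simp
  qed
  have "ev vs1 \<circ> r i = ev ws" using vs v1 by (simp add: ev_snoc)
  moreover have "len (ev vs1) \<le> len (ev ws)" using len_le[OF vs1] vs v1 by simp
  ultimately have "pos (ev vs1 (\<alpha>v i))" using P_main[OF vs1 i] by simp
  moreover have "ev vs1 (\<alpha>v i) = - \<alpha>v i"
  proof -
    have "r i (\<alpha>v i) = - \<alpha>v i" by (simp add: r_apply two[OF i] sc2[where c=1, simplified])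
    then show ?thesis using h fx i linear_neg[OF ev_linear[OF ws]] by simp
  qed
  ultimately show False using not_pos_neg[OF i] by simp
qed

end



context GCM begin

lemma r_lattice: assumes i: "i < n" and x: "x \<in> coroot_lattice n \<alpha>v" shows "r i x \<in> coroot_lattice n \<alpha>v"
proof -
  obtain k where xk: "x = (\<Sum>m<n. of_int (k m) *\<^sub>R \<alpha>v m)" using x unfolding coroot_lattice_def by blast
  define c where "c = (\<Sum>m<n. k m * a m i)"
  have ax: "\<alpha> i x = of_int c"
    unfolding xk c_def using i by (simp add: linear_sum[OF lin[OF i]] linear_scale[OF lin[OF i]] pair)
  define k' where "k' m = k m - (if m = i then c else 0)" for m
  have "(\<Sum>m<n. of_int (k' m) *\<^sub>R \<alpha>v m) = (\<Sum>m<n. of_int (k m) *\<^sub>R \<alpha>v m) - (\<Sum>m<n. (if m = i then of_int c *\<^sub>R \<alpha>v m else 0))"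
  proof -
    have "(\<Sum>m<n. of_int (k' m) *\<^sub>R \<alpha>v m) = (\<Sum>m<n. of_int (k m) *\<^sub>R \<alpha>v m - (if m = i then of_int c *\<^sub>R \<alpha>v m else 0))"
      by (rule sum.cong) (auto simp: k'_def scaleR_diff_left)
    then show ?thesis by (simp only: sum_subtractf)
  qed
  also have "\<dots> = x - of_int c *\<^sub>R \<alpha>v i" using i xk by simp
  also have "\<dots> = r i x" by (simp add: r_apply ax)
  finally have "r i x = (\<Sum>m<n. of_int (k' m) *\<^sub>R \<alpha>v m)" by simp
  then show ?thesis unfolding coroot_lattice_def by (intro CollectI exI[of _ k']) simp
qed

lemma ev_lattice: "ws \<in> lists {..<n} \<Longrightarrow> x \<in> coroot_lattice n \<alpha>v \<Longrightarrow> ev ws x \<in> coroot_lattice n \<alpha>v"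
  by (induction ws arbitrary: x) (auto intro: r_lattice)

lemma av_lattice: "i < n \<Longrightarrow> \<alpha>v i \<in> coroot_lattice n \<alpha>v"
proof -
  assume i: "i < n"
  have sc: "(\<Sum>m<n. of_int (if m = i then 1 else 0) *\<^sub>R \<alpha>v m) = (\<Sum>m<n. (if m = i then 1 else 0) *\<^sub>R \<alpha>v m)"
    by (rule sum.cong) auto
  define kk :: "nat \<Rightarrow> int" where "kk m = (if m = i then 1 else 0)" for m
  have "\<alpha>v i = (\<Sum>m<n. of_int (kk m) *\<^sub>R \<alpha>v m)" using sum_delta_av[OF i] sc by (simp add: kk_def)
  then show ?thesis unfolding coroot_lattice_def by (intro CollectI exI[of _ kk]) simp
qed

lemma main:
  "(\<forall>w\<in>weyl_group n \<alpha> \<alpha>v. w ` coroot_lattice n \<alpha>v = coroot_lattice n \<alpha>v)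
       \<and> inj_on (\<lambda>w. restrict w (coroot_lattice n \<alpha>v)) (weyl_group n \<alpha> \<alpha>v)"
proof
  show "\<forall>w\<in>weyl_group n \<alpha> \<alpha>v. w ` coroot_lattice n \<alpha>v = coroot_lattice n \<alpha>v"
  proof
    fix w assume "w \<in> weyl_group n \<alpha> \<alpha>v"
    then obtain ws where ws: "ws \<in> lists {..<n}" "ev ws = w" using weyl_eq by blast
    have rws: "rev ws \<in> lists {..<n}" using ws by auto
    show "w ` coroot_lattice n \<alpha>v = coroot_lattice n \<alpha>v"
    proof
      show "w ` coroot_lattice n \<alpha>v \<subseteq> coroot_lattice n \<alpha>v" using ev_lattice[OF ws(1)] ws(2) by blast
      show "coroot_lattice n \<alpha>v \<subseteq> w ` coroot_lattice n \<alpha>v"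
      proof
        fix x assume x: "x \<in> coroot_lattice n \<alpha>v"
        have "x = w (ev (rev ws) x)" using fun_cong[OF ev_rev2[OF ws(1)], of x] ws(2) by simp
        then show "x \<in> w ` coroot_lattice n \<alpha>v" using ev_lattice[OF rws x] by blast
      qed
    qed
  qed
  show "inj_on (\<lambda>w. restrict w (coroot_lattice n \<alpha>v)) (weyl_group n \<alpha> \<alpha>v)"
  proof (rule inj_onI)
    fix w w' assume w: "w \<in> weyl_group n \<alpha> \<alpha>v" and w': "w' \<in> weyl_group n \<alpha> \<alpha>v"
      and eq: "restrict w (coroot_lattice n \<alpha>v) = restrict w' (coroot_lattice n \<alpha>v)"
    obtain ws where ws: "ws \<in> lists {..<n}" "ev ws = w" using weyl_eq w by blast
    obtain ws' where ws': "ws' \<in> lists {..<n}" "ev ws' = w'" using weyl_eq w' by blast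
    have agree: "w x = w' x" if "x \<in> coroot_lattice n \<alpha>v" for x
      using fun_cong[OF eq, of x] that by simp
    have gl: "rev ws' @ ws \<in> lists {..<n}" using ws ws' by auto
    have "ev (rev ws' @ ws) = id"
    proof (rule faithful[OF gl], intro allI impI)
      fix i assume i: "i < n"
      have "ev (rev ws' @ ws) (\<alpha>v i) = ev (rev ws') (w' (\<alpha>v i))"
        using agree[OF av_lattice[OF i]] ws by (simp add: ev_append)
      also have "\<dots> = \<alpha>v i" using fun_cong[OF ev_rev[OF ws'(1)], of "\<alpha>v i"] ws' by simp
      finally show "ev (rev ws' @ ws) (\<alpha>v i) = \<alpha>v i" .
    qed
    then have g: "ev (rev ws') \<circ> w = id" using ws by (simp add: ev_append)
    have "w = (w' \<circ> ev (rev ws')) \<circ> w" using ev_rev2[OF ws'(1)] ws' by simp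
    also have "\<dots> = w' \<circ> (ev (rev ws') \<circ> w)" by (rule comp_assoc)
    also have "\<dots> = w'" using g by simp
    finally show "w = w'" .
  qed
qed

end

theorem mainTheorem11:
  fixes n :: nat and a :: "nat \<Rightarrow> nat \<Rightarrow> int"
    and \<alpha> :: "nat \<Rightarrow> 'a::euclidean_space \<Rightarrow> real" and \<alpha>v :: "nat \<Rightarrow> 'a"
  assumes "gen_cartan_matrix n a"
    and "gen_free_realization n a \<alpha> \<alpha>v"
  shows "(\<forall>w\<in>weyl_group n \<alpha> \<alpha>v. w ` coroot_lattice n \<alpha>v = coroot_lattice n \<alpha>v)
       \<and> inj_on (\<lambda>w. restrict w (coroot_lattice n \<alpha>v)) (weyl_group n \<alpha> \<alpha>v)"
proof -
  interpret GCM n a \<alpha> \<alpha>v using assms by unfold_locales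
  show ?thesis by (rule main)
qed


end
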